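(* Let $(\Omega,\mathcal{A})$ be a standard Borel space with probability measure $\mu$. If $A$ is a graphop on $(\Omega,\mathcal{A},\mu)$, then there is a unique finite measure $\nu$ on $(\Omega\times\Omega,\mathcal{A}\otimes\mathcal{A})$ such that: (1) $\nu$ is symmetric, i.e. $\nu(S\times T)=\nu(T\times S)$ for all $S,T\in\mathcal{A}$; (2) the marginal of $\nu$ on $\Omega$ is absolutely continuous with respect to $\mu$; (3) $(f,g)_A=\int_{\Omega^2}f(x)g(y)\,d\nu(x,y)$ for all $f,g\in L^\infty(\Omega)$. Conversely, if $\nu$ is a finite measure on $(\Omega\times\Omega,\mathcal{A}\otimes\mathcal{A})$ satisfying (1) and (2), then there is a unique graphop $A$ on $(\Omega,\mathcal{A},\mu)$ satisfying (3).
   Context: A $P$-operator on a probability space $(\Omega,\mathcal{A},\mu)$ is a linear map $A:L^\infty(\Omega)\to L^1(\Omega)$, $v\mapsto vA$, with $\sup_v\|vA\|_1/\|v\|_\infty<\infty$. Define $(f,g)_A:=\int_\Omega (fA)g\,d\mu$. $A$ is self-adjoint if $(v,w)_A=(w,v)_A$ for all $v,w\in L^\infty(\Omega)$, and positivity-preserving if $v\ge0$ a.e. implies $vA\ge0$ a.e. A graphop is a self-adjoint, positivity-preserving $P$-operator. *)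

theory Defs
  imports "HOL-Probability.Probability"
begin

definition Linf :: "'a measure \<Rightarrow> ('a \<Rightarrow> real) set" where
  "Linf M = {v. v \<in> borel_measurable M \<and> esssup M (\<lambda>x. ereal \<bar>v x\<bar>) < \<infinity>}"

definition linf_norm :: "'a measure \<Rightarrow> ('a \<Rightarrow> real) \<Rightarrow> real" where
  "linf_norm M v = real_of_ereal (esssup M (\<lambda>x. ereal \<bar>v x\<bar>))"

text \<open>A P-operator: a bounded linear map L^infinity -> L^1, acting on representatives,
  well defined on a.e.-classes (all identities between L^1 elements hold a.e.).\<close>
definition P_operator :: "'a measure \<Rightarrow> (('a \<Rightarrow> real) \<Rightarrow> ('a \<Rightarrow> real)) \<Rightarrow> bool" where
  "P_operator M A \<longleftrightarrow>
     (\<forall>v\<in>Linf M. integrable M (A v)) \<and>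
     (\<forall>v\<in>Linf M. \<forall>w\<in>Linf M. (AE x in M. v x = w x) \<longrightarrow> (AE x in M. A v x = A w x)) \<and>
     (\<forall>v\<in>Linf M. \<forall>w\<in>Linf M. \<forall>a b::real.
        AE x in M. A (\<lambda>y. a * v y + b * w y) x = a * A v x + b * A w x) \<and>
     (\<exists>C. \<forall>v\<in>Linf M. (\<integral>x. \<bar>A v x\<bar> \<partial>M) \<le> C * linf_norm M v)"

definition op_form :: "'a measure \<Rightarrow> (('a \<Rightarrow> real) \<Rightarrow> ('a \<Rightarrow> real)) \<Rightarrow> ('a \<Rightarrow> real) \<Rightarrow> ('a \<Rightarrow> real) \<Rightarrow> real" where
  "op_form M A f g = (\<integral>x. A f x * g x \<partial>M)"

definition self_adjoint_op :: "'a measure \<Rightarrow> (('a \<Rightarrow> real) \<Rightarrow> ('a \<Rightarrow> real)) \<Rightarrow> bool" where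
  "self_adjoint_op M A \<longleftrightarrow> (\<forall>v\<in>Linf M. \<forall>w\<in>Linf M. op_form M A v w = op_form M A w v)"

definition positivity_preserving :: "'a measure \<Rightarrow> (('a \<Rightarrow> real) \<Rightarrow> ('a \<Rightarrow> real)) \<Rightarrow> bool" where
  "positivity_preserving M A \<longleftrightarrow>
     (\<forall>v\<in>Linf M. (AE x in M. 0 \<le> v x) \<longrightarrow> (AE x in M. 0 \<le> A v x))"

definition graphop :: "'a measure \<Rightarrow> (('a \<Rightarrow> real) \<Rightarrow> ('a \<Rightarrow> real)) \<Rightarrow> bool" where
  "graphop M A \<longleftrightarrow> P_operator M A \<and> self_adjoint_op M A \<and> positivity_preserving M A"

definition symmetric_measure :: "'a measure \<Rightarrow> ('a \<times> 'a) measure \<Rightarrow> bool" where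
  "symmetric_measure M N \<longleftrightarrow>
     (\<forall>S\<in>sets M. \<forall>T\<in>sets M. emeasure N (S \<times> T) = emeasure N (T \<times> S))"

definition marginal_ac :: "'a measure \<Rightarrow> ('a \<times> 'a) measure \<Rightarrow> bool" where
  "marginal_ac M N \<longleftrightarrow> absolutely_continuous M (distr N M fst)"

definition represents :: "'a measure \<Rightarrow> (('a \<Rightarrow> real) \<Rightarrow> ('a \<Rightarrow> real)) \<Rightarrow> ('a \<times> 'a) measure \<Rightarrow> bool" where
  "represents M A N \<longleftrightarrow>
     (\<forall>f\<in>Linf M. \<forall>g\<in>Linf M. op_form M A f g = (\<integral>p. f (fst p) * g (snd p) \<partial>N))"

definition admissible_measure :: "'a measure \<Rightarrow> ('a \<times> 'a) measure \<Rightarrow> bool" where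
  "admissible_measure M N \<longleftrightarrow> sets N = sets (M \<Otimes>\<^sub>M M) \<and> finite_measure N
     \<and> symmetric_measure M N \<and> marginal_ac M N"

end

theory Submission
  imports Defs
begin

lemma integrable_mult_bdd:
  fixes f g :: "'a \<Rightarrow> real"
  assumes "integrable M f" "g \<in> borel_measurable M" "AE x in M. \<bar>g x\<bar> \<le> c"
  shows "integrable M (\<lambda>x. f x * g x)"
proof -
  have i: "integrable M (\<lambda>x. c * f x)" using assms(1) by simp
  have m: "(\<lambda>x. f x * g x) \<in> borel_measurable M" using assms(1,2) by (simp add: borel_measurable_integrable)
  have "AE x in M. norm (f x * g x) \<le> norm (c * f x)"
    using assms(3)
  proof eventually_elim
    case (elim x)
    have "\<bar>f x\<bar> * \<bar>g x\<bar> \<le> \<bar>f x\<bar> * c" using elim by (intro mult_left_mono) auto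
    also have "\<dots> \<le> \<bar>c\<bar> * \<bar>f x\<bar>" by (simp add: mult.commute mult_right_mono)
    finally show ?case by (simp add: abs_mult)
  qed
  then show ?thesis using Bochner_Integration.integrable_bound[OF i m] by blast
qed

lemma Linf_I:
  assumes "v \<in> borel_measurable M" "AE x in M. \<bar>v x\<bar> \<le> c"
  shows "v \<in> Linf M"
proof -
  have "esssup M (\<lambda>x. ereal \<bar>v x\<bar>) \<le> ereal c"
    using assms by (intro esssup_I) auto
  then show ?thesis using assms(1) unfolding Linf_def by (auto intro: le_less_trans)
qed

lemma Linf_meas: "v \<in> Linf M \<Longrightarrow> v \<in> borel_measurable M"
  by (simp add: Linf_def)

lemma Linf_bdd:
  assumes "v \<in> Linf M"
  obtains c where "AE x in M. \<bar>v x\<bar> \<le> c"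
proof -
  let ?e = "esssup M (\<lambda>x. ereal \<bar>v x\<bar>)"
  have "?e < \<infinity>" using assms by (simp add: Linf_def)
  have "AE x in M. ereal \<bar>v x\<bar> \<le> ?e" by (rule esssup_AE)
  then have "AE x in M. \<bar>v x\<bar> \<le> max 0 (real_of_ereal ?e)"
  proof eventually_elim
    case (elim x) then show ?case using \<open>?e < \<infinity>\<close> by (cases ?e) auto
  qed
  then show ?thesis by (rule that)
qed

lemma Linf_norm_AE:
  assumes "prob_space M" "v \<in> Linf M"
  shows "AE x in M. \<bar>v x\<bar> \<le> linf_norm M v"
proof -
  let ?e = "esssup M (\<lambda>x. ereal \<bar>v x\<bar>)"
  have fin: "?e < \<infinity>" using assms by (simp add: Linf_def)
  have "emeasure M (space M) \<noteq> 0" using assms(1) by (simp add: prob_space.emeasure_space_1)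
  then have "esssup M (\<lambda>x. ereal 0) = 0" using esssup_const[of M "ereal 0"] by simp
  moreover have "esssup M (\<lambda>x. ereal 0) \<le> ?e" by (intro esssup_mono) auto
  ultimately have "0 \<le> ?e" by simp
  have "AE x in M. ereal \<bar>v x\<bar> \<le> ?e" by (rule esssup_AE)
  then show ?thesis
  proof eventually_elim
    case (elim x) then show ?case using fin \<open>0 \<le> ?e\<close> by (cases ?e) (auto simp: linf_norm_def)
  qed
qed

lemma Linf_lin:
  assumes "v \<in> Linf M" "w \<in> Linf M"
  shows "(\<lambda>x. a * v x + b * w x) \<in> Linf M"
proof -
  obtain c1 where c1: "AE x in M. \<bar>v x\<bar> \<le> c1" using Linf_bdd[OF assms(1)] by blast
  obtain c2 where c2: "AE x in M. \<bar>w x\<bar> \<le> c2" using Linf_bdd[OF assms(2)] by blast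
  show ?thesis
  proof (rule Linf_I)
    show "(\<lambda>x. a * v x + b * w x) \<in> borel_measurable M" using Linf_meas[OF assms(1)] Linf_meas[OF assms(2)] by (auto intro!: borel_measurable_add borel_measurable_times)
    show "AE x in M. \<bar>a * v x + b * w x\<bar> \<le> \<bar>a\<bar> * c1 + \<bar>b\<bar> * c2"
      using c1 c2
    proof eventually_elim
      case (elim x)
      have "\<bar>a * v x + b * w x\<bar> \<le> \<bar>a\<bar> * \<bar>v x\<bar> + \<bar>b\<bar> * \<bar>w x\<bar>" by (simp add: abs_mult abs_triangle_ineq order_trans[OF abs_triangle_ineq])
      also have "\<dots> \<le> \<bar>a\<bar> * c1 + \<bar>b\<bar> * c2" using elim by (intro add_mono mult_left_mono) auto
      finally show ?case .
    qed
  qed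
qed

lemma Linf_indicator: "S \<in> sets M \<Longrightarrow> indicator S \<in> Linf M"
  by (rule Linf_I[where c=1]) (auto simp: indicator_def)

lemma Linf_const: "(\<lambda>x. c) \<in> Linf M"
  by (rule Linf_I[where c="\<bar>c\<bar>"]) auto

lemma Linf_sum:
  assumes "finite I" "\<And>i. i \<in> I \<Longrightarrow> f i \<in> Linf M"
  shows "(\<lambda>x. \<Sum>i\<in>I. c i * f i x) \<in> Linf M"
  using assms
proof (induction I rule: finite_induct)
  case empty then show ?case using Linf_const[where c=0 and M=M] by simp
next
  case (insert j I)
  have "(\<lambda>x. c j * f j x + 1 * (\<Sum>i\<in>I. c i * f i x)) \<in> Linf M"
    using insert by (intro Linf_lin) auto
  then show ?case using insert by simp
qed

lemma Linf_max0:
  assumes "v \<in> Linf M"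
  shows "(\<lambda>x. max 0 (v x)) \<in> Linf M" "(\<lambda>x. max 0 (- v x)) \<in> Linf M"
proof -
  obtain c where c: "AE x in M. \<bar>v x\<bar> \<le> c" using Linf_bdd[OF assms] by blast
  have m: "v \<in> borel_measurable M" using assms by (simp add: Linf_meas)
  show "(\<lambda>x. max 0 (v x)) \<in> Linf M"
    by (rule Linf_I[where c=c]) (use m c in auto)
  show "(\<lambda>x. max 0 (- v x)) \<in> Linf M"
    by (rule Linf_I[where c=c]) (use m c in auto)
qed

lemma AE_eq_by_sets:
  fixes \<phi> \<psi> :: "'a \<Rightarrow> real"
  assumes "integrable M \<phi>" "integrable M \<psi>"
    and eq: "\<And>T. T \<in> sets M \<Longrightarrow> (\<integral>x. \<phi> x * indicator T x \<partial>M) = (\<integral>x. \<psi> x * indicator T x \<partial>M)"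
  shows "AE x in M. \<phi> x = \<psi> x"
proof -
  define D where "D x = \<phi> x - \<psi> x" for x
  have iD: "integrable M D" using assms unfolding D_def by auto
  have mD: "D \<in> borel_measurable M" using iD by (simp add: borel_measurable_integrable)
  have key: "(\<integral>x. D x * indicator T x \<partial>M) = 0" if "T \<in> sets M" for T
  proof -
    have "(\<integral>x. D x * indicator T x \<partial>M) = (\<integral>x. \<phi> x * indicator T x - \<psi> x * indicator T x \<partial>M)"
      by (simp add: D_def left_diff_distrib)
    also have "\<dots> = 0" using eq[OF that] assms that
      by (subst Bochner_Integration.integral_diff) (auto intro: integrable_real_mult_indicator)
    finally show ?thesis .
  qed
  define P where "P = {x \<in> space M. 0 < D x}"
  define Q where "Q = {x \<in> space M. D x < 0}"
  have PQ: "P \<in> sets M" "Q \<in> sets M" using mD unfolding P_def Q_def by measurable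
  have i1: "integrable M (\<lambda>x. D x * indicator P x)"
    using PQ(1) iD by (rule integrable_real_mult_indicator)
  have i2: "integrable M (\<lambda>x. - (D x * indicator Q x))"
    using integrable_real_mult_indicator[OF PQ(2) iD] by simp
  have n1: "AE x in M. 0 \<le> D x * indicator P x" by (auto simp: P_def indicator_def)
  have n2: "AE x in M. 0 \<le> - (D x * indicator Q x)" by (auto simp: Q_def indicator_def mult_le_0_iff)
  have "AE x in M. D x * indicator P x = 0"
    using integral_nonneg_eq_0_iff_AE[OF i1 n1] key[OF PQ(1)] by simp
  moreover have "AE x in M. - (D x * indicator Q x) = 0"
    using integral_nonneg_eq_0_iff_AE[OF i2 n2] key[OF PQ(2)] by simp
  moreover note AE_space
  ultimately show ?thesis
    by eventually_elim (auto simp: P_def Q_def D_def indicator_def split: if_splits)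
qed

lemma PO_int: "P_operator M A \<Longrightarrow> v \<in> Linf M \<Longrightarrow> integrable M (A v)"
  by (simp add: P_operator_def)

lemma PO_cong: "P_operator M A \<Longrightarrow> v \<in> Linf M \<Longrightarrow> w \<in> Linf M \<Longrightarrow> AE x in M. v x = w x
   \<Longrightarrow> AE x in M. A v x = A w x"
  by (simp add: P_operator_def)

lemma PO_lin: "P_operator M A \<Longrightarrow> v \<in> Linf M \<Longrightarrow> w \<in> Linf M \<Longrightarrow>
   AE x in M. A (\<lambda>y. a * v y + b * w y) x = a * A v x + b * A w x"
  unfolding P_operator_def by blast

lemma PO_zero:
  assumes "P_operator M A"
  shows "AE x in M. A (\<lambda>y. 0) x = 0"
  using PO_lin[OF assms Linf_const Linf_const, of 0 0 0 0] by simp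

lemma PO_sum:
  assumes "P_operator M A" "finite I" "\<And>i. i \<in> I \<Longrightarrow> f i \<in> Linf M"
  shows "AE x in M. A (\<lambda>y. \<Sum>i\<in>I. c i * f i y) x = (\<Sum>i\<in>I. c i * A (f i) x)"
  using assms(2,3)
proof (induction I rule: finite_induct)
  case empty then show ?case using PO_zero[OF assms(1)] by simp
next
  case (insert j I)
  have L: "(\<lambda>y. \<Sum>i\<in>I. c i * f i y) \<in> Linf M" using insert by (intro Linf_sum) auto
  have "AE x in M. A (\<lambda>y. c j * f j y + 1 * (\<Sum>i\<in>I. c i * f i y)) x
      = c j * A (f j) x + 1 * A (\<lambda>y. \<Sum>i\<in>I. c i * f i y) x"
    using insert L by (intro PO_lin[OF assms(1)]) auto
  moreover have "AE x in M. A (\<lambda>y. \<Sum>i\<in>I. c i * f i y) x = (\<Sum>i\<in>I. c i * A (f i) x)"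
    using insert by auto
  ultimately show ?case using insert by (auto elim: AE_mp)
qed

locale admN = prob_space M for M :: "'a measure" +
  fixes N :: "('a \<times> 'a) measure"
  assumes adm: "admissible_measure M N"
begin

lemma sN: "sets N = sets (M \<Otimes>\<^sub>M M)"
  using adm by (simp add: admissible_measure_def)

lemma spN: "space N = space M \<times> space M"
  using sets_eq_imp_space_eq[OF sN] by (simp add: space_pair_measure)

lemma finN: "finite_measure N"
  using adm by (simp add: admissible_measure_def)

lemma measeq: "N \<rightarrow>\<^sub>M X = (M \<Otimes>\<^sub>M M) \<rightarrow>\<^sub>M X"
  by (rule measurable_cong_sets[OF sN refl])

lemma measN: "f \<in> borel_measurable (M \<Otimes>\<^sub>M M) \<Longrightarrow> f \<in> borel_measurable N"
  by (simp only: measeq)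

lemma meas_fst: "fst \<in> N \<rightarrow>\<^sub>M M"
  by (simp only: measeq) simp

lemma meas_snd: "snd \<in> N \<rightarrow>\<^sub>M M"
  by (simp only: measeq) simp

lemma meas_swap: "(\<lambda>p. (snd p, fst p)) \<in> N \<rightarrow>\<^sub>M (M \<Otimes>\<^sub>M M)"
  using meas_fst meas_snd by (intro measurable_Pair) auto

lemma symN: "S \<in> sets M \<Longrightarrow> T \<in> sets M \<Longrightarrow> emeasure N (S \<times> T) = emeasure N (T \<times> S)"
  using adm by (simp add: admissible_measure_def symmetric_measure_def)

lemma swapN: "N = distr N (M \<Otimes>\<^sub>M M) (\<lambda>p. (snd p, fst p))"
proof (rule measure_eqI_generator_eq[where E="{a \<times> b |a b. a \<in> sets M \<and> b \<in> sets M}"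
      and \<Omega>="space M \<times> space M" and A="\<lambda>_. space M \<times> space M"])
  show "Int_stable {a \<times> b |a b. a \<in> sets M \<and> b \<in> sets M}"
    using Int_stable_pair_measure_generator[of M M] by simp
  show "{a \<times> b |a b. a \<in> sets M \<and> b \<in> sets M} \<subseteq> Pow (space M \<times> space M)"
    by (auto dest!: sets.sets_into_space)
  fix X assume "X \<in> {a \<times> b |a b. a \<in> sets M \<and> b \<in> sets M}"
  then obtain a b where X: "X = a \<times> b" "a \<in> sets M" "b \<in> sets M" by blast
  have "(\<lambda>p. (snd p, fst p)) -` X \<inter> space N = b \<times> a"
    using sets.sets_into_space[OF X(2)] sets.sets_into_space[OF X(3)] unfolding X(1) spN by auto
  then show "emeasure N X = emeasure (distr N (M \<Otimes>\<^sub>M M) (\<lambda>p. (snd p, fst p))) X"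
    using X meas_swap by (simp add: emeasure_distr symN)
next
  show "sets N = sigma_sets (space M \<times> space M) {a \<times> b |a b. a \<in> sets M \<and> b \<in> sets M}"
    by (simp add: sN sets_pair_measure)
  show "sets (distr N (M \<Otimes>\<^sub>M M) (\<lambda>p. (snd p, fst p))) = sigma_sets (space M \<times> space M) {a \<times> b |a b. a \<in> sets M \<and> b \<in> sets M}"
    by (simp add: sets_pair_measure)
  show "range (\<lambda>_. space M \<times> space M) \<subseteq> {a \<times> b |a b. a \<in> sets M \<and> b \<in> sets M}" by auto
  show "\<Union> (range (\<lambda>_. space M \<times> space M)) = space M \<times> space M" by simp
  show "emeasure N (space M \<times> space M) \<noteq> \<infinity>"
    using finite_measure.emeasure_finite[OF finN, of "space N"] by (simp add: spN)
qed

lemma int_swap: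
  assumes "F \<in> borel_measurable (M \<Otimes>\<^sub>M M)"
  shows "(\<integral>p. F (snd p, fst p) \<partial>N) = (\<integral>p. (F p :: real) \<partial>N)"
  using integral_distr[OF meas_swap assms] by (simp add: swapN[symmetric])

lemma AE_fst:
  assumes "AE x in M. P x"
  shows "AE p in N. P (fst p)"
proof -
  have "absolutely_continuous M (distr N M fst)" using adm by (simp add: admissible_measure_def marginal_ac_def)
  then have "AE x in distr N M fst. P x"
    using assms by (rule absolutely_continuous_AE[rotated]) simp
  then show ?thesis by (rule AE_distrD[OF meas_fst])
qed

lemma AE_swap:
  assumes "AE p in N. P p"
  shows "AE p in N. P (snd p, fst p)"
proof -
  have e: "distr N (M \<Otimes>\<^sub>M M) (\<lambda>p. (snd p, fst p)) = N" by (rule swapN[symmetric])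
  have "AE p in distr N (M \<Otimes>\<^sub>M M) (\<lambda>p. (snd p, fst p)). P p"
    using assms by (simp only: e)
  from AE_distrD[OF meas_swap this] show ?thesis by simp
qed

lemma AE_snd:
  assumes "AE x in M. P x"
  shows "AE p in N. P (snd p)"
  using AE_swap[OF AE_fst[OF assms]] by simp

lemma Linf_fst_bdd:
  assumes "v \<in> Linf M"
  obtains c where "AE p in N. \<bar>v (fst p)\<bar> \<le> c"
proof -
  obtain c where "AE x in M. \<bar>v x\<bar> \<le> c" using Linf_bdd[OF assms] by blast
  then show ?thesis using AE_fst[of "\<lambda>x. \<bar>v x\<bar> \<le> c"] that by blast
qed

lemma Linf_snd_bdd:
  assumes "v \<in> Linf M"
  obtains c where "AE p in N. \<bar>v (snd p)\<bar> \<le> c"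
proof -
  obtain c where "AE x in M. \<bar>v x\<bar> \<le> c" using Linf_bdd[OF assms] by blast
  then show ?thesis using AE_snd[of "\<lambda>x. \<bar>v x\<bar> \<le> c"] that by blast
qed

lemma int_fg:
  assumes "f \<in> Linf M" "g \<in> Linf M"
  shows "integrable N (\<lambda>p. f (fst p) * g (snd p))"
proof -
  obtain c1 where c1: "AE p in N. \<bar>f (fst p)\<bar> \<le> c1" using Linf_fst_bdd[OF assms(1)] by blast
  obtain c2 where c2: "AE p in N. \<bar>g (snd p)\<bar> \<le> c2" using Linf_snd_bdd[OF assms(2)] by blast
  have i: "integrable N (\<lambda>p. c1)" using finite_measure.integrable_const[OF finN] .
  have mf: "(\<lambda>p. f (fst p)) \<in> borel_measurable N"
    using measurable_compose[OF meas_fst Linf_meas[OF assms(1)]] .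
  have mg: "(\<lambda>p. g (snd p)) \<in> borel_measurable N"
    using measurable_compose[OF meas_snd Linf_meas[OF assms(2)]] .
  have i2: "integrable N (\<lambda>p. c1 * c2)" using finite_measure.integrable_const[OF finN] .
  have m: "(\<lambda>p. f (fst p) * g (snd p)) \<in> borel_measurable N"
    using mf mg by (rule borel_measurable_times)
  have "AE p in N. norm (f (fst p) * g (snd p)) \<le> norm (c1 * c2)"
    using c1 c2
  proof eventually_elim
    case (elim p)
    have "norm (f (fst p) * g (snd p)) = \<bar>f (fst p)\<bar> * \<bar>g (snd p)\<bar>" by (simp add: abs_mult)
    also have "\<dots> \<le> c1 * c2"
      using elim by (intro mult_mono) auto
    also have "\<dots> \<le> norm (c1 * c2)" by simp
    finally show ?case .
  qed
  then show ?thesis using Bochner_Integration.integrable_bound[OF i2 m] by blast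
qed

end

definition nuN :: "'a measure \<Rightarrow> ('a \<times> 'a) measure \<Rightarrow> ('a \<Rightarrow> real) \<Rightarrow> 'a measure" where
  "nuN M N v = distr (density N (\<lambda>p. ennreal (v (fst p)))) M snd"

definition rdN :: "'a measure \<Rightarrow> ('a \<times> 'a) measure \<Rightarrow> ('a \<Rightarrow> real) \<Rightarrow> 'a \<Rightarrow> real" where
  "rdN M N v = (SOME r. r \<in> borel_measurable M \<and> (\<forall>x. 0 \<le> r x) \<and> density M (\<lambda>x. ennreal (r x)) = nuN M N v)"

definition AN :: "'a measure \<Rightarrow> ('a \<times> 'a) measure \<Rightarrow> ('a \<Rightarrow> real) \<Rightarrow> 'a \<Rightarrow> real" where
  "AN M N v = (\<lambda>y. rdN M N (\<lambda>x. max 0 (v x)) y - rdN M N (\<lambda>x. max 0 (- v x)) y)"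

context admN
begin

lemma meas_snd_dens: "snd \<in> density N h \<rightarrow>\<^sub>M M"
  using meas_snd by (simp add: measurable_cong_sets[OF sets_density refl])

lemma nu_props:
  assumes "v \<in> Linf M" "\<And>x. 0 \<le> v x"
  shows "sets (nuN M N v) = sets M" "finite_measure (nuN M N v)" "absolutely_continuous M (nuN M N v)"
    "space (nuN M N v) = space M"
proof -
  let ?h = "\<lambda>p. ennreal (v (fst p))"
  have hm: "?h \<in> borel_measurable N"
    using measurable_compose[OF meas_fst Linf_meas[OF assms(1)]] by simp
  show s: "sets (nuN M N v) = sets M" by (simp add: nuN_def)
  show sp: "space (nuN M N v) = space M" by (simp add: nuN_def)
  have pre: "snd -` X \<inter> space (density N ?h) \<in> sets N" if "X \<in> sets M" for X
    using measurable_sets[OF meas_snd that] by (simp add: spN)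
  have em: "emeasure (nuN M N v) X = (\<integral>\<^sup>+p. ?h p * indicator (snd -` X \<inter> space N) p \<partial>N)"
    if "X \<in> sets M" for X
    unfolding nuN_def using that pre[OF that] hm
    by (simp add: emeasure_distr[OF meas_snd_dens] emeasure_density)
  obtain c where c: "AE p in N. \<bar>v (fst p)\<bar> \<le> c" using Linf_fst_bdd[OF assms(1)] by blast
  have "emeasure (nuN M N v) (space M) = (\<integral>\<^sup>+p. ?h p * indicator (snd -` space M \<inter> space N) p \<partial>N)"
    using em by simp
  also have "\<dots> \<le> (\<integral>\<^sup>+p. ennreal c \<partial>N)"
    using c by (intro nn_integral_mono_AE) (auto simp: indicator_def intro!: ennreal_leI)
  also have "\<dots> < \<infinity>"
    using finite_measure.emeasure_finite[OF finN, of "space N"]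
    by (simp add: ennreal_mult_less_top less_top)
  finally show "finite_measure (nuN M N v)"
    by (intro finite_measureI) (simp add: sp)
  show "absolutely_continuous M (nuN M N v)"
    unfolding absolutely_continuous_def
  proof
    fix S assume S: "S \<in> null_sets M"
    then have Ss: "S \<in> sets M" by auto
    have "AE x in M. x \<notin> S" using S by (rule AE_not_in)
    then have ae: "AE p in N. snd p \<notin> S" by (rule AE_snd)
    have "emeasure (nuN M N v) S = (\<integral>\<^sup>+p. ?h p * indicator (snd -` S \<inter> space N) p \<partial>N)"
      using em[OF Ss] .
    also have "\<dots> = (\<integral>\<^sup>+p. 0 \<partial>N)"
      using ae by (intro nn_integral_cong_AE) (auto simp: indicator_def)
    finally show "S \<in> null_sets (nuN M N v)" using Ss s by (intro null_setsI) auto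
  qed
qed

lemma rd_props:
  assumes "v \<in> Linf M" "\<And>x. 0 \<le> v x"
  shows "rdN M N v \<in> borel_measurable M" "\<And>x. 0 \<le> rdN M N v x"
    "density M (\<lambda>x. ennreal (rdN M N v x)) = nuN M N v"
proof -
  note nu = nu_props[OF assms]
  have "\<exists>f\<in>borel_measurable M. density M f = nuN M N v"
    by (rule Radon_Nikodym_finite_measure[OF nu(2) nu(1) nu(3)])
  then obtain f where f: "f \<in> borel_measurable M" "density M f = nuN M N v" by blast
  have "emeasure (density M f) (space M) \<noteq> \<infinity>"
    using finite_measure.emeasure_finite[OF nu(2), of "space M"] f(2) nu(4) by simp
  moreover have "emeasure (density M f) (space M) = (\<integral>\<^sup>+x. f x \<partial>M)"
    using f(1) by (subst emeasure_density) (auto intro!: nn_integral_cong)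
  ultimately have ae: "AE x in M. f x \<noteq> \<infinity>" using nn_integral_PInf_AE[OF f(1)] by simp
  have fm: "(\<lambda>x. ennreal (enn2real (f x))) \<in> borel_measurable M" using f(1) by measurable
  have "AE x in M. ennreal (enn2real (f x)) = f x"
    using ae by eventually_elim (simp add: less_top)
  then have "density M (\<lambda>x. ennreal (enn2real (f x))) = density M f"
    by (rule density_cong[OF fm f(1)])
  then have "\<exists>r. r \<in> borel_measurable M \<and> (\<forall>x. 0 \<le> r x) \<and> density M (\<lambda>x. ennreal (r x)) = nuN M N v"
    using f fm by (intro exI[of _ "\<lambda>x. enn2real (f x)"]) simp
  then have P: "rdN M N v \<in> borel_measurable M \<and> (\<forall>x. 0 \<le> rdN M N v x) \<and>
      density M (\<lambda>x. ennreal (rdN M N v x)) = nuN M N v"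
    unfolding rdN_def by (rule someI_ex)
  then show "rdN M N v \<in> borel_measurable M" "\<And>x. 0 \<le> rdN M N v x"
    "density M (\<lambda>x. ennreal (rdN M N v x)) = nuN M N v" by auto
qed

lemma rd_int:
  assumes "v \<in> Linf M" "\<And>x. 0 \<le> v x"
  shows "integrable M (rdN M N v)"
proof (rule integrableI_nonneg)
  note r = rd_props[OF assms]
  show "rdN M N v \<in> borel_measurable M" by (rule r(1))
  show "AE x in M. 0 \<le> rdN M N v x" using r(2) by simp
  have "(\<integral>\<^sup>+x. ennreal (rdN M N v x) \<partial>M) = emeasure (density M (\<lambda>x. ennreal (rdN M N v x))) (space M)"
    using r(1) by (subst emeasure_density) (auto intro!: nn_integral_cong)
  also have "\<dots> = emeasure (nuN M N v) (space M)" using r(3) by simp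
  also have "\<dots> < \<infinity>" using finite_measure.emeasure_finite[OF nu_props(2)[OF assms], of "space M"]
    by (simp add: less_top)
  finally show "(\<integral>\<^sup>+x. ennreal (rdN M N v x) \<partial>M) < \<infinity>" .
qed

lemma rd_eq:
  assumes "v \<in> Linf M" "\<And>x. 0 \<le> v x" "g \<in> Linf M"
  shows "integrable M (\<lambda>y. rdN M N v y * g y)"
    "(\<integral>y. rdN M N v y * g y \<partial>M) = (\<integral>p. v (fst p) * g (snd p) \<partial>N)"
proof -
  note r = rd_props[OF assms(1,2)]
  obtain c where c: "AE x in M. \<bar>g x\<bar> \<le> c" using Linf_bdd[OF assms(3)] by blast
  have gm: "g \<in> borel_measurable M" using assms(3) by (rule Linf_meas)
  show "integrable M (\<lambda>y. rdN M N v y * g y)"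
    using integrable_mult_bdd[OF rd_int[OF assms(1,2)] gm c] .
  have vm: "(\<lambda>p. v (fst p)) \<in> borel_measurable N"
    using measurable_compose[OF meas_fst Linf_meas[OF assms(1)]] .
  have gsm: "(\<lambda>p. g (snd p)) \<in> borel_measurable N"
    using measurable_compose[OF meas_snd gm] .
  have "(\<integral>y. rdN M N v y * g y \<partial>M) = integral\<^sup>L (density M (\<lambda>x. ennreal (rdN M N v x))) g"
    using r gm by (subst integral_density) auto
  also have "\<dots> = integral\<^sup>L (nuN M N v) g" using r(3) by simp
  also have "\<dots> = (\<integral>p. g (snd p) \<partial>density N (\<lambda>p. ennreal (v (fst p))))"
    unfolding nuN_def using gm by (rule integral_distr[OF meas_snd_dens])
  also have "\<dots> = (\<integral>p. v (fst p) * g (snd p) \<partial>N)"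
    using vm gsm assms(2) by (subst integral_density) auto
  finally show "(\<integral>y. rdN M N v y * g y \<partial>M) = (\<integral>p. v (fst p) * g (snd p) \<partial>N)" .
qed

lemma AN_rep:
  assumes "v \<in> Linf M" "g \<in> Linf M"
  shows "integrable M (AN M N v)"
    "(\<integral>y. AN M N v y * g y \<partial>M) = (\<integral>p. v (fst p) * g (snd p) \<partial>N)"
proof -
  note vp = Linf_max0(1)[OF assms(1)] and vn = Linf_max0(2)[OF assms(1)]
  have p0: "\<And>x. 0 \<le> max 0 (v x)" "\<And>x. 0 \<le> max 0 (- v x)" by auto
  show "integrable M (AN M N v)"
    unfolding AN_def using rd_int[OF vp p0(1)] rd_int[OF vn p0(2)] by auto
  note e1 = rd_eq[OF vp p0(1) assms(2)] and e2 = rd_eq[OF vn p0(2) assms(2)]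
  have "(\<integral>y. AN M N v y * g y \<partial>M) =
      (\<integral>y. rdN M N (\<lambda>x. max 0 (v x)) y * g y - rdN M N (\<lambda>x. max 0 (- v x)) y * g y \<partial>M)"
    unfolding AN_def by (simp add: left_diff_distrib)
  also have "\<dots> = (\<integral>p. max 0 (v (fst p)) * g (snd p) \<partial>N) - (\<integral>p. max 0 (- v (fst p)) * g (snd p) \<partial>N)"
    using e1 e2 by (subst Bochner_Integration.integral_diff) auto
  also have "\<dots> = (\<integral>p. max 0 (v (fst p)) * g (snd p) - max 0 (- v (fst p)) * g (snd p) \<partial>N)"
    using int_fg[OF vp assms(2)] int_fg[OF vn assms(2)]
    by (subst Bochner_Integration.integral_diff) auto
  also have "\<dots> = (\<integral>p. v (fst p) * g (snd p) \<partial>N)"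
    by (rule Bochner_Integration.integral_cong) (auto simp: max_def algebra_simps)
  finally show "(\<integral>y. AN M N v y * g y \<partial>M) = (\<integral>p. v (fst p) * g (snd p) \<partial>N)" .
qed

end

context admN
begin

lemma AN_AE_eq:
  assumes "integrable M \<phi>" "v \<in> Linf M"
    and eq: "\<And>T. T \<in> sets M \<Longrightarrow> (\<integral>x. \<phi> x * indicator T x \<partial>M) = (\<integral>p. v (fst p) * indicator T (snd p) \<partial>N)"
  shows "AE x in M. \<phi> x = AN M N v x"
proof (rule AE_eq_by_sets[OF assms(1) AN_rep(1)[OF assms(2) Linf_const]])
  fix T assume T: "T \<in> sets M"
  show "(\<integral>x. \<phi> x * indicator T x \<partial>M) = (\<integral>x. AN M N v x * indicator T x \<partial>M)"
    using eq[OF T] AN_rep(2)[OF assms(2) Linf_indicator[OF T]] by simp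
qed

lemma AN_meas: "v \<in> Linf M \<Longrightarrow> AN M N v \<in> borel_measurable M"
  using AN_rep(1)[OF _ Linf_const] by (simp add: borel_measurable_integrable)

lemma meas_fst_comp: "v \<in> Linf M \<Longrightarrow> (\<lambda>p. v (fst p)) \<in> borel_measurable N"
  using measurable_compose[OF meas_fst Linf_meas] by blast

lemma meas_snd_comp: "v \<in> Linf M \<Longrightarrow> (\<lambda>p. v (snd p)) \<in> borel_measurable N"
  using measurable_compose[OF meas_snd Linf_meas] by blast

lemma AN_P_operator: "P_operator M (AN M N)"
  unfolding P_operator_def
proof (intro conjI ballI allI impI)
  fix v assume v: "v \<in> Linf M"
  show "integrable M (AN M N v)" using AN_rep(1)[OF v Linf_const] .
next
  fix v w assume v: "v \<in> Linf M" and w: "w \<in> Linf M" and ae: "AE x in M. v x = w x"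
  show "AE x in M. AN M N v x = AN M N w x"
  proof (rule AN_AE_eq[OF AN_rep(1)[OF v Linf_const] w])
    fix T assume T: "T \<in> sets M"
    have "(\<integral>x. AN M N v x * indicator T x \<partial>M) = (\<integral>p. v (fst p) * indicator T (snd p) \<partial>N)"
      using AN_rep(2)[OF v Linf_indicator[OF T]] .
    also have "\<dots> = (\<integral>p. w (fst p) * indicator T (snd p) \<partial>N)"
      using AE_fst[OF ae] int_fg[OF v Linf_indicator[OF T]] int_fg[OF w Linf_indicator[OF T]]
      by (intro integral_cong_AE) (auto simp: borel_measurable_integrable elim: AE_mp)
    finally show "(\<integral>x. AN M N v x * indicator T x \<partial>M) = (\<integral>p. w (fst p) * indicator T (snd p) \<partial>N)" .
  qed
next
  fix v w a b assume v: "v \<in> Linf M" and w: "w \<in> Linf M"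
  have u: "(\<lambda>y. a * v y + b * w y) \<in> Linf M" using Linf_lin[OF v w] .
  have iv: "integrable M (AN M N v)" and iw: "integrable M (AN M N w)"
    using AN_rep(1)[OF v Linf_const] AN_rep(1)[OF w Linf_const] .
  have "AE x in M. a * AN M N v x + b * AN M N w x = AN M N (\<lambda>y. a * v y + b * w y) x"
  proof (rule AN_AE_eq[OF _ u])
    show "integrable M (\<lambda>x. a * AN M N v x + b * AN M N w x)" using iv iw by auto
    fix T assume T: "T \<in> sets M"
    have "(\<integral>x. (a * AN M N v x + b * AN M N w x) * indicator T x \<partial>M)
        = (\<integral>x. a * (AN M N v x * indicator T x) + b * (AN M N w x * indicator T x) \<partial>M)"
      by (simp add: algebra_simps)
    also have "\<dots> = a * (\<integral>x. AN M N v x * indicator T x \<partial>M) + b * (\<integral>x. AN M N w x * indicator T x \<partial>M)"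
      using iv iw T by (simp add: integrable_real_mult_indicator)
    also have "\<dots> = a * (\<integral>p. v (fst p) * indicator T (snd p) \<partial>N) + b * (\<integral>p. w (fst p) * indicator T (snd p) \<partial>N)"
      using AN_rep(2)[OF v Linf_indicator[OF T]] AN_rep(2)[OF w Linf_indicator[OF T]] by simp
    also have "\<dots> = (\<integral>p. a * (v (fst p) * indicator T (snd p)) + b * (w (fst p) * indicator T (snd p)) \<partial>N)"
      using int_fg[OF v Linf_indicator[OF T]] int_fg[OF w Linf_indicator[OF T]] by simp
    also have "\<dots> = (\<integral>p. (a * v (fst p) + b * w (fst p)) * indicator T (snd p) \<partial>N)"
      by (simp add: algebra_simps)
    finally show "(\<integral>x. (a * AN M N v x + b * AN M N w x) * indicator T x \<partial>M)
        = (\<integral>p. (a * v (fst p) + b * w (fst p)) * indicator T (snd p) \<partial>N)" .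
  qed
  then show "AE x in M. AN M N (\<lambda>y. a * v y + b * w y) x = a * AN M N v x + b * AN M N w x"
    by (auto elim: AE_mp)
next
  show "\<exists>C. \<forall>v\<in>Linf M. (\<integral>x. \<bar>AN M N v x\<bar> \<partial>M) \<le> C * linf_norm M v"
  proof (intro exI ballI)
    fix v assume v: "v \<in> Linf M"
    define g where "g y = sgn (AN M N v y)" for y
    have gm: "g \<in> borel_measurable M" unfolding g_def using AN_meas[OF v] by measurable
    have g: "g \<in> Linf M" by (rule Linf_I[OF gm, where c=1]) (auto simp: g_def sgn_real_def)
    have "(\<integral>x. \<bar>AN M N v x\<bar> \<partial>M) = (\<integral>x. AN M N v x * g x \<partial>M)"
      by (rule Bochner_Integration.integral_cong) (auto simp: g_def sgn_real_def)
    also have "\<dots> = (\<integral>p. v (fst p) * g (snd p) \<partial>N)" using AN_rep(2)[OF v g] .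
    also have "\<dots> \<le> (\<integral>p. linf_norm M v \<partial>N)"
    proof (rule integral_mono_AE[OF int_fg[OF v g]])
      show "integrable N (\<lambda>p. linf_norm M v)" using finite_measure.integrable_const[OF finN] .
      have "AE x in M. \<bar>v x\<bar> \<le> linf_norm M v" using Linf_norm_AE[OF prob_space_axioms v] .
      then have "AE p in N. \<bar>v (fst p)\<bar> \<le> linf_norm M v" by (rule AE_fst)
      then show "AE p in N. v (fst p) * g (snd p) \<le> linf_norm M v"
      proof eventually_elim
        case (elim p)
        have "v (fst p) * g (snd p) \<le> \<bar>v (fst p)\<bar> * \<bar>g (snd p)\<bar>" by (metis abs_ge_self abs_mult)
        also have "\<dots> \<le> \<bar>v (fst p)\<bar> * 1" by (intro mult_left_mono) (auto simp: g_def sgn_real_def)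
        finally show ?case using elim by simp
      qed
    qed
    also have "\<dots> = measure N (space N) * linf_norm M v" by simp
    finally show "(\<integral>x. \<bar>AN M N v x\<bar> \<partial>M) \<le> measure N (space N) * linf_norm M v" .
  qed
qed

lemma AN_self_adjoint: "self_adjoint_op M (AN M N)"
  unfolding self_adjoint_op_def op_form_def
proof (intro ballI)
  fix v w assume v: "v \<in> Linf M" and w: "w \<in> Linf M"
  have Fm: "(\<lambda>q. w (fst q) * v (snd q)) \<in> borel_measurable (M \<Otimes>\<^sub>M M)"
    using Linf_meas[OF v] Linf_meas[OF w] by measurable
  have "(\<integral>x. AN M N v x * w x \<partial>M) = (\<integral>p. v (fst p) * w (snd p) \<partial>N)" using AN_rep(2)[OF v w] .
  also have "\<dots> = (\<integral>p. w (snd p) * v (fst p) \<partial>N)" by (simp add: mult.commute)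
  also have "\<dots> = (\<integral>p. w (fst p) * v (snd p) \<partial>N)" using int_swap[OF Fm] by simp
  also have "\<dots> = (\<integral>x. AN M N w x * v x \<partial>M)" using AN_rep(2)[OF w v] by simp
  finally show "(\<integral>x. AN M N v x * w x \<partial>M) = (\<integral>x. AN M N w x * v x \<partial>M)" .
qed

lemma AN_pos: "positivity_preserving M (AN M N)"
  unfolding positivity_preserving_def
proof (intro ballI impI)
  fix v assume v: "v \<in> Linf M" and ae: "AE x in M. 0 \<le> v x"
  define T where "T = {x \<in> space M. AN M N v x < 0}"
  have T: "T \<in> sets M" unfolding T_def using AN_meas[OF v] by measurable
  have i: "integrable M (\<lambda>x. - (AN M N v x * indicator T x))"
    using integrable_real_mult_indicator[OF T AN_rep(1)[OF v Linf_const]] by simp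
  have n: "AE x in M. 0 \<le> - (AN M N v x * indicator T x)"
    by (auto simp: T_def indicator_def)
  have "0 \<le> (\<integral>p. v (fst p) * indicator T (snd p) \<partial>N)"
    using AE_fst[OF ae] by (intro integral_nonneg_AE) (auto elim: AE_mp)
  also have "\<dots> = (\<integral>x. AN M N v x * indicator T x \<partial>M)" using AN_rep(2)[OF v Linf_indicator[OF T]] by simp
  finally have "(\<integral>x. - (AN M N v x * indicator T x) \<partial>M) \<le> 0" by simp
  moreover have "0 \<le> (\<integral>x. - (AN M N v x * indicator T x) \<partial>M)" using n by (rule integral_nonneg_AE)
  ultimately have "(\<integral>x. - (AN M N v x * indicator T x) \<partial>M) = 0" by simp
  then have "AE x in M. - (AN M N v x * indicator T x) = 0"
    using integral_nonneg_eq_0_iff_AE[OF i n] by simp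
  then show "AE x in M. 0 \<le> AN M N v x"
    using AE_space by eventually_elim (auto simp: T_def indicator_def split: if_splits)
qed

lemma AN_graphop: "graphop M (AN M N)"
  using AN_P_operator AN_self_adjoint AN_pos by (simp add: graphop_def)

lemma AN_represents: "represents M (AN M N) N"
  unfolding represents_def op_form_def using AN_rep(2) by blast

lemma AN_unique:
  assumes "graphop M B" "represents M B N" "v \<in> Linf M"
  shows "AE x in M. B v x = AN M N v x"
proof (rule AN_AE_eq[OF _ assms(3)])
  show "integrable M (B v)" using assms(1,3) by (simp add: graphop_def PO_int)
  fix T assume T: "T \<in> sets M"
  show "(\<integral>x. B v x * indicator T x \<partial>M) = (\<integral>p. v (fst p) * indicator T (snd p) \<partial>N)"
    using assms(2) assms(3) Linf_indicator[OF T] unfolding represents_def op_form_def by blast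
qed

end

definition rr :: "'a measure \<Rightarrow> (('a \<Rightarrow> real) \<Rightarrow> ('a \<Rightarrow> real)) \<Rightarrow> 'a set \<Rightarrow> 'a set \<Rightarrow> real" where
  "rr M A S T = op_form M A (indicator S) (indicator T)"

locale gph = prob_space M for M :: "'a measure" +
  fixes A :: "('a \<Rightarrow> real) \<Rightarrow> ('a \<Rightarrow> real)"
  assumes gA: "graphop M A"
begin

lemma PO: "P_operator M A" using gA by (simp add: graphop_def)
lemma SA: "self_adjoint_op M A" using gA by (simp add: graphop_def)
lemma PP: "positivity_preserving M A" using gA by (simp add: graphop_def)

lemma A_int: "v \<in> Linf M \<Longrightarrow> integrable M (A v)" using PO by (rule PO_int)

lemma A_pos: "v \<in> Linf M \<Longrightarrow> AE x in M. 0 \<le> v x \<Longrightarrow> AE x in M. 0 \<le> A v x"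
  using PP by (simp add: positivity_preserving_def)

lemma r_nonneg:
  assumes "S \<in> sets M" "T \<in> sets M"
  shows "0 \<le> rr M A S T"
proof -
  have "AE x in M. 0 \<le> A (indicator S) x" using A_pos[OF Linf_indicator[OF assms(1)]] by simp
  then show ?thesis unfolding rr_def op_form_def
    by (intro integral_nonneg_AE) (auto elim: AE_mp)
qed

lemma r_sym:
  assumes "S \<in> sets M" "T \<in> sets M"
  shows "rr M A S T = rr M A T S"
  using SA Linf_indicator[OF assms(1)] Linf_indicator[OF assms(2)]
  unfolding rr_def self_adjoint_op_def by blast

lemma G:
  fixes I :: "'i set" and c :: "'i \<Rightarrow> real" and S T :: "'i \<Rightarrow> 'a set"
  assumes I: "finite I" and S: "\<And>i. i \<in> I \<Longrightarrow> S i \<in> sets M" and T: "\<And>i. i \<in> I \<Longrightarrow> T i \<in> sets M"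
    and pos: "\<And>x y. x \<in> space M \<Longrightarrow> y \<in> space M \<Longrightarrow>
      0 \<le> (\<Sum>i\<in>I. c i * indicator (S i) x * indicator (T i) y)"
  shows "0 \<le> (\<Sum>i\<in>I. c i * rr M A (S i) (T i))"
proof -
  define Q where "Q J = space M - (\<Union>i\<in>I. if i \<in> J then space M - T i else T i)" for J
  have Qm: "Q J \<in> sets M" for J
    unfolding Q_def using I T by (intro sets.Diff sets.top sets.finite_UN) auto
  have Qmem: "y \<in> Q J \<longleftrightarrow> y \<in> space M \<and> (\<forall>i\<in>I. (y \<in> T i) = (i \<in> J))" for y J
    unfolding Q_def by auto
  define P where "P i = {J \<in> Pow I. i \<in> J}" for i
  have finP: "finite (P i)" for i using I unfolding P_def by auto
  have dec: "indicator (T i) y = (\<Sum>J\<in>P i. indicator (Q J) y :: real)"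
    if y: "y \<in> space M" and i: "i \<in> I" for i y
  proof -
    define J0 where "J0 = {j \<in> I. y \<in> T j}"
    have "(\<Sum>J\<in>P i. indicator (Q J) y :: real) = (\<Sum>J\<in>P i. if J = J0 then 1 else 0)"
    proof (rule sum.cong[OF refl])
      fix J assume "J \<in> P i"
      then have "J \<subseteq> I" by (simp add: P_def)
      then have "y \<in> Q J \<longleftrightarrow> J = J0" using y by (auto simp: Qmem J0_def)
      then show "indicator (Q J) y = (if J = J0 then 1 else (0::real))" by (simp add: indicator_def)
    qed
    also have "\<dots> = (if J0 \<in> P i then 1 else 0)" using finP[of i] by simp
    also have "\<dots> = indicator (T i) y" using i by (auto simp: P_def J0_def indicator_def)
    finally show ?thesis by simp
  qed
  define a where "a i = A (indicator (S i))" for i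
  have ia: "integrable M (a i)" if "i \<in> I" for i unfolding a_def using A_int[OF Linf_indicator[OF S[OF that]]] .
  define X where "X i J = (\<integral>x. a i x * indicator (Q J) x \<partial>M)" for i J
  have step1: "rr M A (S i) (T i) = (\<Sum>J\<in>P i. X i J)" if i: "i \<in> I" for i
  proof -
    have "rr M A (S i) (T i) = (\<integral>x. a i x * indicator (T i) x \<partial>M)"
      by (simp add: rr_def op_form_def a_def)
    also have "\<dots> = (\<integral>x. (\<Sum>J\<in>P i. a i x * indicator (Q J) x) \<partial>M)"
      by (rule Bochner_Integration.integral_cong[OF refl]) (simp add: dec[OF _ i] sum_distrib_left)
    also have "\<dots> = (\<Sum>J\<in>P i. X i J)" unfolding X_def
      by (rule Bochner_Integration.integral_sum) (rule integrable_real_mult_indicator[OF Qm ia[OF i]])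
    finally show ?thesis .
  qed
  have "(\<Sum>i\<in>I. c i * rr M A (S i) (T i)) = (\<Sum>i\<in>I. \<Sum>J\<in>P i. c i * X i J)"
    by (simp add: step1 sum_distrib_left)
  also have "\<dots> = (\<Sum>J\<in>Pow I. \<Sum>i\<in>{i \<in> I. i \<in> J}. c i * X i J)"
    unfolding P_def using I by (intro sum.swap_restrict) auto
  also have "\<dots> = (\<Sum>J\<in>Pow I. \<Sum>i\<in>J. c i * X i J)"
    by (rule sum.cong[OF refl]) (rule sum.cong, auto)
  also have "0 \<le> \<dots>"
  proof (rule sum_nonneg)
    fix J assume J: "J \<in> Pow I"
    then have JI: "J \<subseteq> I" by simp
    have finJ: "finite J" using JI I by (rule finite_subset)
    define h where "h x = (\<Sum>i\<in>J. c i * indicator (S i) x)" for x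
    have hL: "h \<in> Linf M" unfolding h_def using JI S by (intro Linf_sum finJ Linf_indicator) auto
    have Ah: "AE x in M. A h x = (\<Sum>i\<in>J. c i * a i x)"
      unfolding h_def a_def using JI S finJ by (intro PO_sum[OF PO]) (auto intro!: Linf_indicator)
    have "(\<Sum>i\<in>J. c i * X i J) = (\<integral>x. (\<Sum>i\<in>J. c i * (a i x * indicator (Q J) x)) \<partial>M)"
      unfolding X_def using JI ia Qm
      by (subst Bochner_Integration.integral_sum) (auto intro!: integrable_real_mult_indicator)
    also have "\<dots> = (\<integral>x. A h x * indicator (Q J) x \<partial>M)"
    proof (rule integral_cong_AE)
      show "(\<lambda>x. \<Sum>i\<in>J. c i * (a i x * indicator (Q J) x)) \<in> borel_measurable M"
        using JI ia Qm by (intro borel_measurable_sum borel_measurable_times borel_measurable_const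
            borel_measurable_integrable integrable_real_mult_indicator) auto
      show "(\<lambda>x. A h x * indicator (Q J) x) \<in> borel_measurable M"
        using A_int[OF hL] Qm by (intro borel_measurable_integrable integrable_real_mult_indicator)
      show "AE x in M. (\<Sum>i\<in>J. c i * (a i x * indicator (Q J) x)) = A h x * indicator (Q J) x"
        using Ah by eventually_elim (simp add: sum_distrib_right mult.assoc)
    qed
    also have "0 \<le> \<dots>"
    proof (cases "Q J = {}")
      case True then show ?thesis by simp
    next
      case False
      then obtain y where yQ: "y \<in> Q J" by blast
      then have y: "y \<in> space M" and yT: "\<And>i. i \<in> I \<Longrightarrow> (y \<in> T i) = (i \<in> J)" by (auto simp: Qmem)
      have "h x = (\<Sum>i\<in>I. c i * indicator (S i) x * indicator (T i) y)" for x
      proof -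
        have "(\<Sum>i\<in>I. c i * indicator (S i) x * indicator (T i) y) = (\<Sum>i\<in>I. if i \<in> J then c i * indicator (S i) x else 0)"
          by (rule sum.cong[OF refl]) (auto simp: yT indicator_def)
        also have "\<dots> = (\<Sum>i\<in>{i\<in>I. i \<in> J}. c i * indicator (S i) x)"
          by (rule sum.inter_filter[OF I, symmetric])
        also have "{i\<in>I. i \<in> J} = J" using JI by auto
        finally show ?thesis by (simp add: h_def)
      qed
      then have "AE x in M. 0 \<le> h x" using pos y by auto
      then have "AE x in M. 0 \<le> A h x" by (rule A_pos[OF hL])
      then show ?thesis by (intro integral_nonneg_AE) (auto elim: AE_mp)
    qed
    finally show "0 \<le> (\<Sum>i\<in>J. c i * X i J)" .
  qed
  finally show ?thesis .
qed

end

context gph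
begin

lemma Gle:
  fixes I :: "'i set" and J :: "'j set"
  assumes I: "finite I" and J: "finite J"
    and S: "\<And>i. i \<in> I \<Longrightarrow> S i \<in> sets M" and T: "\<And>i. i \<in> I \<Longrightarrow> T i \<in> sets M"
    and S': "\<And>j. j \<in> J \<Longrightarrow> S' j \<in> sets M" and T': "\<And>j. j \<in> J \<Longrightarrow> T' j \<in> sets M"
    and le: "\<And>x y. x \<in> space M \<Longrightarrow> y \<in> space M \<Longrightarrow>
      (\<Sum>i\<in>I. c i * indicator (S i) x * indicator (T i) y) \<le> (\<Sum>j\<in>J. d j * indicator (S' j) x * indicator (T' j) y)"
  shows "(\<Sum>i\<in>I. c i * rr M A (S i) (T i)) \<le> (\<Sum>j\<in>J. d j * rr M A (S' j) (T' j))"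
proof -
  define cc where "cc = case_sum (\<lambda>i. - c i) d"
  define SS where "SS = case_sum S S'"
  define TT where "TT = case_sum T T'"
  have "0 \<le> (\<Sum>k\<in>I <+> J. cc k * rr M A (SS k) (TT k))"
  proof (rule G)
    show "finite (I <+> J)" using I J by simp
    show "SS k \<in> sets M" "TT k \<in> sets M" if "k \<in> I <+> J" for k
      using that S T S' T' by (auto simp: SS_def TT_def)
    fix x y assume xy: "x \<in> space M" "y \<in> space M"
    have "(\<Sum>k\<in>I <+> J. cc k * indicator (SS k) x * indicator (TT k) y) =
      (\<Sum>j\<in>J. d j * indicator (S' j) x * indicator (T' j) y) - (\<Sum>i\<in>I. c i * indicator (S i) x * indicator (T i) y)"
      by (simp only: sum.Plus[OF I J] comp_def cc_def SS_def TT_def sum.case mult_minus_left sum_negf)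
    then show "0 \<le> (\<Sum>k\<in>I <+> J. cc k * indicator (SS k) x * indicator (TT k) y)"
      using le[OF xy] by simp
  qed
  also have "(\<Sum>k\<in>I <+> J. cc k * rr M A (SS k) (TT k)) =
      (\<Sum>j\<in>J. d j * rr M A (S' j) (T' j)) - (\<Sum>i\<in>I. c i * rr M A (S i) (T i))"
    by (simp only: sum.Plus[OF I J] comp_def cc_def SS_def TT_def sum.case mult_minus_left sum_negf)
  finally show ?thesis by simp
qed

lemma r_empty1: assumes "T \<in> sets M" shows "rr M A {} T = 0"
proof -
  have "AE x in M. A (\<lambda>y. 0) x = 0" by (rule PO_zero[OF PO])
  moreover have i: "integrable M (\<lambda>x. A (\<lambda>y. 0) x * indicator T x)"
    using integrable_real_mult_indicator[OF assms A_int[OF Linf_const]] .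
  ultimately have "(\<integral>x. A (\<lambda>y. 0) x * indicator T x \<partial>M) = (\<integral>x. 0 \<partial>M)"
    by (intro integral_cong_AE) (auto elim: AE_mp simp: borel_measurable_integrable)
  moreover have "indicator {} = (\<lambda>y::'a. 0::real)" by (rule ext) simp
  ultimately show ?thesis by (simp add: rr_def op_form_def)
qed

lemma r_empty2: "rr M A S {} = 0"
  by (simp add: rr_def op_form_def)

definition Lm where "Lm = density M (\<lambda>x. ennreal (A (indicator (space M)) x))"

lemma a1: "integrable M (A (indicator (space M)))" "AE x in M. 0 \<le> A (indicator (space M)) x"
  using A_int[OF Linf_indicator[OF sets.top]] A_pos[OF Linf_indicator[OF sets.top]] by auto

lemma Lm_sets[simp]: "sets Lm = sets M" and Lm_space[simp]: "space Lm = space M"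
  by (simp_all add: Lm_def)

lemma Lm_eq:
  assumes E: "E \<in> sets M"
  shows "emeasure Lm E = ennreal (rr M A (space M) E)"
proof -
  have m: "A (indicator (space M)) \<in> borel_measurable M" using a1(1) by (simp add: borel_measurable_integrable)
  have "emeasure Lm E = (\<integral>\<^sup>+x. ennreal (A (indicator (space M)) x) * indicator E x \<partial>M)"
    unfolding Lm_def using m E by (simp add: emeasure_density)
  also have "\<dots> = (\<integral>\<^sup>+x. ennreal (A (indicator (space M)) x * indicator E x) \<partial>M)"
    by (intro nn_integral_cong) (simp add: indicator_def)
  also have "\<dots> = ennreal (\<integral>x. A (indicator (space M)) x * indicator E x \<partial>M)"
    using a1 E by (intro nn_integral_eq_integral integrable_real_mult_indicator) (auto elim: AE_mp)
  finally show ?thesis by (simp add: rr_def op_form_def)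
qed

lemma Lm_fin: "finite_measure Lm"
  by (rule finite_measureI) (simp add: Lm_eq)

lemma Lm_measure: "E \<in> sets M \<Longrightarrow> measure Lm E = rr M A (space M) E"
  using Lm_eq r_nonneg[OF sets.top] by (simp add: measure_def)

lemma Lm_diff:
  assumes "E \<in> sets M" "F \<in> sets M" "F \<subseteq> E"
  shows "rr M A (space M) (E - F) = rr M A (space M) E - rr M A (space M) F"
  using finite_measure.finite_measure_Diff[OF Lm_fin, of E F] assms
  by (simp add: Lm_measure sets.Diff)

end

lemma disj_sum_le:
  assumes "disjoint_family R" "finite F"
  shows "(\<Sum>n\<in>F. indicator (R n) z :: real) \<le> indicator (\<Union>n. R n) z"
proof (cases "\<exists>m. z \<in> R m")
  case True
  then obtain m where m: "z \<in> R m" by blast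
  have "(\<Sum>n\<in>F. indicator (R n) z :: real) = (\<Sum>n\<in>F. if n = m then 1 else 0)"
  proof (rule sum.cong[OF refl])
    fix n assume "n \<in> F"
    show "indicator (R n) z = (if n = m then 1 else (0::real))"
      using m assms(1) by (auto simp: indicator_def disjoint_family_on_def)
  qed
  also have "\<dots> \<le> 1" using assms(2) by simp
  finally show ?thesis using m by (auto simp: indicator_def)
next
  case False then show ?thesis by (simp add: indicator_def)
qed

lemma rect_semiring: "semiring_of_sets (space M \<times> space M) {a \<times> b |a b. a \<in> sets M \<and> b \<in> sets M}"
proof (unfold_locales, safe)
  fix a b c d assume ab: "a \<in> sets M" "b \<in> sets M" and cd: "c \<in> sets M" "d \<in> sets M"
  let ?C = "{(a - c) \<times> b, (a \<inter> c) \<times> (b - d)}"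
  have "?C \<subseteq> {a \<times> b |a b. a \<in> sets M \<and> b \<in> sets M}" using ab cd by auto
  moreover have "disjoint ?C" by (auto simp: disjoint_def)
  moreover have "a \<times> b - c \<times> d = \<Union>?C" by auto
  ultimately show "\<exists>C\<subseteq>{a \<times> b |a b. a \<in> sets M \<and> b \<in> sets M}. finite C \<and> disjoint C \<and> a \<times> b - c \<times> d = \<Union> C"
    by (intro exI[of _ ?C]) auto
next
  fix a b c d assume ab: "a \<in> sets M" "b \<in> sets M" and cd: "c \<in> sets M" "d \<in> sets M"
  show "\<exists>x y. a \<times> b \<inter> c \<times> d = x \<times> y \<and> x \<in> sets M \<and> y \<in> sets M"
    using ab cd by (intro exI[of _ "a \<inter> c"] exI[of _ "b \<inter> d"]) auto
qed (auto dest: sets.sets_into_space)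

locale gphP = gph M A for M :: "'a::polish_space measure" and A +
  assumes sb: "sets M = sets borel"
begin

lemma spU: "space M = UNIV"
  using sets_eq_imp_space_eq[OF sb] by simp

lemma compact_sets: "compact K \<Longrightarrow> K \<in> sets M"
  by (simp add: sb compact_imp_closed borel_closed)

lemma open_sets: "open U \<Longrightarrow> U \<in> sets M"
  by (simp add: sb borel_open)

lemma inner_approx:
  assumes S: "S \<in> sets M" and e: "0 < e"
  shows "\<exists>K. compact K \<and> K \<subseteq> S \<and> rr M A (space M) (S - K) < e"
proof (cases "rr M A (space M) S < e")
  case True then show ?thesis by (intro exI[of _ "{}"]) auto
next
  case False
  have Lb: "sets Lm = sets borel" by (simp add: sb)
  have fin: "emeasure Lm (space Lm) \<noteq> \<infinity>" by (simp add: Lm_eq)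
  have reg: "emeasure Lm S = (SUP K \<in> {K. K \<subseteq> S \<and> compact K}. emeasure Lm K)"
    using inner_regular[OF Lb fin] S sb by simp
  have "ennreal (rr M A (space M) S - e) < ennreal (rr M A (space M) S)"
    using False e by (subst ennreal_less_iff) auto
  then have "ennreal (rr M A (space M) S - e) < (SUP K \<in> {K. K \<subseteq> S \<and> compact K}. emeasure Lm K)"
    using reg Lm_eq[OF S] by simp
  then obtain K where K: "K \<subseteq> S" "compact K" "ennreal (rr M A (space M) S - e) < emeasure Lm K"
    by (auto simp: less_SUP_iff)
  have Ks: "K \<in> sets M" using compact_sets[OF K(2)] .
  have "rr M A (space M) S - e < rr M A (space M) K"
    using K(3) False Lm_eq[OF Ks] ennreal_less_iff[of "rr M A (space M) S - e" "rr M A (space M) K"] by simp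
  then have "rr M A (space M) (S - K) < e" using Lm_diff[OF S Ks K(1)] by simp
  then show ?thesis using K by blast
qed

lemma outer_approx:
  assumes S: "S \<in> sets M" and e: "0 < e"
  shows "\<exists>U. open U \<and> S \<subseteq> U \<and> rr M A (space M) (U - S) < e"
proof -
  have Lb: "sets Lm = sets borel" by (simp add: sb)
  have fin: "emeasure Lm (space Lm) \<noteq> \<infinity>" by (simp add: Lm_eq)
  have reg: "emeasure Lm S = (INF U \<in> {U. S \<subseteq> U \<and> open U}. emeasure Lm U)"
    using outer_regular[OF Lb fin] S sb by simp
  have "ennreal (rr M A (space M) S) < ennreal (rr M A (space M) S + e)"
    using e r_nonneg[OF sets.top S] by (subst ennreal_less_iff) auto
  then have "(INF U \<in> {U. S \<subseteq> U \<and> open U}. emeasure Lm U) < ennreal (rr M A (space M) S + e)"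
    using reg Lm_eq[OF S] by simp
  then obtain U where U: "S \<subseteq> U" "open U" "emeasure Lm U < ennreal (rr M A (space M) S + e)"
    by (auto simp: INF_less_iff)
  have Us: "U \<in> sets M" using open_sets[OF U(2)] .
  have "rr M A (space M) U < rr M A (space M) S + e"
    using U(3) Lm_eq[OF Us] r_nonneg[OF sets.top Us]
      ennreal_less_iff[of "rr M A (space M) U" "rr M A (space M) S + e"] by simp
  then have "rr M A (space M) (U - S) < e" using Lm_diff[OF Us S U(1)] by simp
  then show ?thesis using U by blast
qed

lemma U3:
  assumes "S \<in> sets M" "T \<in> sets M" "U \<in> sets M" "V \<in> sets M" "S \<subseteq> U" "T \<subseteq> V"
  shows "rr M A U V \<le> rr M A S T + rr M A (space M) (U - S) + rr M A (space M) (V - T)"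
proof -
  define S' where "S' j = (if j = (0::nat) then S else if j = 1 then U - S else space M)" for j
  define T' where "T' j = (if j = (0::nat) then T else if j = 1 then space M else V - T)" for j
  have "(\<Sum>i\<in>{()}. 1 * rr M A ((\<lambda>_. U) i) ((\<lambda>_. V) i)) \<le> (\<Sum>j\<in>{0,1,2}. 1 * rr M A (S' j) (T' j))"
  proof (rule Gle)
    show "S' j \<in> sets M" "T' j \<in> sets M" if "j \<in> {0,1,2}" for j
      using that assms by (auto simp: S'_def T'_def)
    fix x y assume "x \<in> space M" "y \<in> space M"
    have eq: "(\<Sum>j\<in>{0,1,2}. g j) = g 0 + g 1 + g (2::nat)" for g :: "nat \<Rightarrow> real" by simp
    show "(\<Sum>i\<in>{()}. 1 * indicator ((\<lambda>_. U) i) x * indicator ((\<lambda>_. V) i) y)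
        \<le> (\<Sum>j\<in>{0,1,2}. 1 * indicator (S' j) x * indicator (T' j) y :: real)"
      unfolding eq using \<open>x \<in> space M\<close> \<open>y \<in> space M\<close> assms(5,6)
      by (simp add: S'_def T'_def) (auto simp: indicator_def)
  qed (use assms in auto)
  then show ?thesis
    using r_sym[OF sets.Diff[OF assms(3,1)] sets.top]
    by (simp add: S'_def T'_def)
qed

end

context gphP
begin

lemma r_countable_add:
  assumes Sn: "\<And>n. Sn n \<in> sets M" and Tn: "\<And>n. Tn n \<in> sets M" and S: "S \<in> sets M" and T: "T \<in> sets M"
    and disj: "disjoint_family (\<lambda>n. Sn n \<times> Tn n)" and un: "(\<Union>n. Sn n \<times> Tn n) = S \<times> T"
  shows "(\<Sum>n. ennreal (rr M A (Sn n) (Tn n))) = ennreal (rr M A S T)"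
proof -
  define a where "a n = rr M A (Sn n) (Tn n)" for n
  define m where "m E = rr M A (space M) E" for E
  have a0: "0 \<le> a n" for n unfolding a_def using Sn Tn by (rule r_nonneg)
  have part: "(\<Sum>n<K. a n) \<le> rr M A S T" for K
  proof -
    have "(\<Sum>n\<in>{..<K}. 1 * rr M A (Sn n) (Tn n)) \<le> (\<Sum>j\<in>{()}. 1 * rr M A ((\<lambda>_. S) j) ((\<lambda>_. T) j))"
    proof (rule Gle)
      fix x y
      have "(\<Sum>n\<in>{..<K}. 1 * indicator (Sn n) x * indicator (Tn n) y :: real)
          = (\<Sum>n\<in>{..<K}. indicator (Sn n \<times> Tn n) (x, y))"
        by (simp add: indicator_times)
      also have "\<dots> \<le> indicator (\<Union>n. Sn n \<times> Tn n) (x, y)"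
        using disj by (rule disj_sum_le) simp
      also have "\<dots> = (\<Sum>j\<in>{()}. 1 * indicator ((\<lambda>_. S) j) x * indicator ((\<lambda>_. T) j) y)"
        by (simp add: un indicator_times)
      finally show "(\<Sum>n\<in>{..<K}. 1 * indicator (Sn n) x * indicator (Tn n) y :: real)
          \<le> (\<Sum>j\<in>{()}. 1 * indicator ((\<lambda>_. S) j) x * indicator ((\<lambda>_. T) j) y)" .
    qed (use Sn Tn S T in auto)
    then show ?thesis by (simp add: a_def)
  qed
  have summ: "summable a" by (rule summableI_nonneg_bounded[OF a0 part])
  have le1: "suminf a \<le> rr M A S T" by (rule suminf_le_const[OF summ part])
  have le2: "rr M A S T \<le> suminf a"
  proof (rule field_le_epsilon)
    fix e :: real assume e: "0 < e"
    define d where "d = e / 4"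
    have d: "0 < d" using e by (simp add: d_def)
    obtain K where K: "compact K" "K \<subseteq> S" "m (S - K) < d" using inner_approx[OF S d] by (auto simp: m_def)
    obtain L where L: "compact L" "L \<subseteq> T" "m (T - L) < d" using inner_approx[OF T d] by (auto simp: m_def)
    define b where "b n = d * (1/2)^Suc n" for n
    have b0: "0 < b n" for n using d by (simp add: b_def)
    have bs: "b sums d" unfolding b_def using sums_mult[OF power_half_series, of d] by simp
    have "\<forall>n. \<exists>U. open U \<and> Sn n \<subseteq> U \<and> m (U - Sn n) < b n"
      using outer_approx[OF Sn b0] by (auto simp: m_def)
    then obtain U where U: "\<And>n. open (U n)" "\<And>n. Sn n \<subseteq> U n" "\<And>n. m (U n - Sn n) < b n"
      by metis
    have "\<forall>n. \<exists>V. open V \<and> Tn n \<subseteq> V \<and> m (V - Tn n) < b n"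
      using outer_approx[OF Tn b0] by (auto simp: m_def)
    then obtain V where V: "\<And>n. open (V n)" "\<And>n. Tn n \<subseteq> V n" "\<And>n. m (V n - Tn n) < b n"
      by metis
    have UVs: "U n \<in> sets M" "V n \<in> sets M" for n using open_sets U(1) V(1) by auto
    have KLs: "K \<in> sets M" "L \<in> sets M" using compact_sets K(1) L(1) by auto
    have rUV: "rr M A (U n) (V n) \<le> a n + 2 * b n" for n
    proof -
      have "rr M A (U n) (V n) \<le> a n + m (U n - Sn n) + m (V n - Tn n)"
        unfolding a_def m_def using Sn Tn UVs U(2) V(2) by (intro U3) auto
      then show ?thesis using U(3)[of n] V(3)[of n] by simp
    qed
    have "K \<times> L \<subseteq> (\<Union>n. U n \<times> V n)"
    proof -
      have "K \<times> L \<subseteq> S \<times> T" using K(2) L(2) by auto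
      also have "\<dots> = (\<Union>n. Sn n \<times> Tn n)" using un by simp
      also have "\<dots> \<subseteq> (\<Union>n. U n \<times> V n)" using U(2) V(2) by blast
      finally show ?thesis .
    qed
    note cov0 = this
    obtain C where C: "finite C" "K \<times> L \<subseteq> (\<Union>n\<in>C. U n \<times> V n)"
    proof (rule compactE_image[OF compact_Times[OF K(1) L(1)], of UNIV "\<lambda>n. U n \<times> V n"])
      show "open (U n \<times> V n)" if "n \<in> UNIV" for n using U(1) V(1) by (rule open_Times)
      show "K \<times> L \<subseteq> (\<Union>n\<in>UNIV. U n \<times> V n)" using cov0 by simp
    qed (auto intro: that)
    obtain K' where K': "C \<subseteq> {..<K'}" using finite_nat_bounded[OF C(1)] by blast
    have cov: "K \<times> L \<subseteq> (\<Union>n\<in>{..<K'}. U n \<times> V n)" using C(2) K' by blast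
    have "(\<Sum>j\<in>{()}. 1 * rr M A ((\<lambda>_. K) j) ((\<lambda>_. L) j)) \<le> (\<Sum>n\<in>{..<K'}. 1 * rr M A (U n) (V n))"
    proof (rule Gle)
      fix x y
      show "(\<Sum>j\<in>{()}. 1 * indicator ((\<lambda>_. K) j) x * indicator ((\<lambda>_. L) j) y)
          \<le> (\<Sum>n\<in>{..<K'}. 1 * indicator (U n) x * indicator (V n) y :: real)"
      proof (cases "x \<in> K \<and> y \<in> L")
        case True
        then obtain n where n: "n < K'" "x \<in> U n" "y \<in> V n" using cov by blast
        have "(1::real) = 1 * indicator (U n) x * indicator (V n) y" using n by simp
        also have "\<dots> \<le> (\<Sum>n\<in>{..<K'}. 1 * indicator (U n) x * indicator (V n) y :: real)"
          using n by (intro member_le_sum) auto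
        finally show ?thesis using True by simp
      next
        case False
        then show ?thesis by (auto intro!: sum_nonneg)
      qed
    qed (use KLs UVs in auto)
    then have "rr M A K L \<le> (\<Sum>n<K'. rr M A (U n) (V n))" by simp
    also have "\<dots> \<le> (\<Sum>n<K'. a n + 2 * b n)" by (intro sum_mono rUV)
    also have "\<dots> = (\<Sum>n<K'. a n) + 2 * (\<Sum>n<K'. b n)" by (simp add: sum.distrib sum_distrib_left)
    also have "\<dots> \<le> suminf a + 2 * d"
    proof -
      have "(\<Sum>n<K'. a n) \<le> suminf a" using sum_le_suminf[OF summ, of "{..<K'}"] a0 by auto
      moreover have "(\<Sum>n<K'. b n) \<le> d"
        using sum_le_suminf[OF sums_summable[OF bs], of "{..<K'}"] b0 sums_unique[OF bs]
        by (auto intro: less_imp_le)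
      ultimately show ?thesis by simp
    qed
    finally have kl: "rr M A K L \<le> suminf a + 2 * d" .
    have "rr M A S T \<le> rr M A K L + m (S - K) + m (T - L)"
      unfolding m_def using KLs S T K(2) L(2) by (intro U3) auto
    then show "rr M A S T \<le> suminf a + e" using kl K(3) L(3) by (simp add: d_def)
  qed
  have "(\<Sum>n. ennreal (a n)) = ennreal (suminf a)" by (rule suminf_ennreal2[OF a0 summ])
  then show ?thesis using le1 le2 by (simp add: a_def)
qed

end

lemma adm_eq:
  assumes N1: "admissible_measure M N1" and N2: "admissible_measure M N2"
    and eq: "\<And>S T. S \<in> sets M \<Longrightarrow> T \<in> sets M \<Longrightarrow> emeasure N1 (S \<times> T) = emeasure N2 (S \<times> T)"
  shows "N1 = N2"
proof (rule measure_eqI_generator_eq[where E="{a \<times> b |a b. a \<in> sets M \<and> b \<in> sets M}"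
      and \<Omega>="space M \<times> space M" and A="\<lambda>_. space M \<times> space M"])
  show "Int_stable {a \<times> b |a b. a \<in> sets M \<and> b \<in> sets M}"
    using Int_stable_pair_measure_generator[of M M] by simp
  show "{a \<times> b |a b. a \<in> sets M \<and> b \<in> sets M} \<subseteq> Pow (space M \<times> space M)"
    by (auto dest!: sets.sets_into_space)
  show "emeasure N1 X = emeasure N2 X" if "X \<in> {a \<times> b |a b. a \<in> sets M \<and> b \<in> sets M}" for X
    using that eq by auto
  show "sets N1 = sigma_sets (space M \<times> space M) {a \<times> b |a b. a \<in> sets M \<and> b \<in> sets M}"
    using N1 by (simp add: admissible_measure_def sets_pair_measure)
  show "sets N2 = sigma_sets (space M \<times> space M) {a \<times> b |a b. a \<in> sets M \<and> b \<in> sets M}"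
    using N2 by (simp add: admissible_measure_def sets_pair_measure)
  show "range (\<lambda>_. space M \<times> space M) \<subseteq> {a \<times> b |a b. a \<in> sets M \<and> b \<in> sets M}" by auto
  show "\<Union> (range (\<lambda>_. space M \<times> space M)) = space M \<times> space M" by simp
  have sp: "space N1 = space M \<times> space M"
    using sets_eq_imp_space_eq[of N1 "M \<Otimes>\<^sub>M M"] N1 by (simp add: admissible_measure_def space_pair_measure)
  have "finite_measure N1" using N1 by (simp add: admissible_measure_def)
  then show "emeasure N1 (space M \<times> space M) \<noteq> \<infinity>"
    using finite_measure.emeasure_finite[of N1 "space N1"] by (simp add: sp)
qed

context admN
begin

lemma rect_int:
  assumes "S \<in> sets M" "T \<in> sets M"
  shows "(\<integral>p. indicator S (fst p) * indicator T (snd p) \<partial>N) = measure N (S \<times> T)"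
proof -
  have "(\<lambda>p. indicator S (fst p) * indicator T (snd p) :: real) = indicator (S \<times> T)"
    by (rule ext) (simp add: indicator_times)
  moreover have "S \<times> T \<inter> space N = S \<times> T"
    using sets.sets_into_space[OF assms(1)] sets.sets_into_space[OF assms(2)] by (auto simp: spN)
  ultimately show ?thesis by simp
qed

lemma rect_emeasure:
  assumes "S \<in> sets M" "T \<in> sets M"
  shows "emeasure N (S \<times> T) = ennreal (\<integral>p. indicator S (fst p) * indicator T (snd p) \<partial>N)"
  using rect_int[OF assms] finite_measure.emeasure_eq_measure[OF finN] by simp

end

context gphP
begin

definition N0 where
  "N0 = extend_measure (space M \<times> space M) {(a, b). a \<in> sets M \<and> b \<in> sets M} (\<lambda>(a, b). a \<times> b)
     (\<lambda>(a, b). ennreal (rr M A a b))"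

lemma N0_rect:
  assumes "S \<in> sets M" "T \<in> sets M"
  shows "emeasure N0 (S \<times> T) = ennreal (rr M A S T)"
proof (rule extend_measure_caratheodory_pair[where P="\<lambda>a b. a \<in> sets M \<and> b \<in> sets M"
      and G="\<lambda>a b. a \<times> b" and \<mu>="\<lambda>a b. ennreal (rr M A a b)", OF N0_def])
  show "S \<in> sets M \<and> T \<in> sets M" using assms by simp
  show "semiring_of_sets (space M \<times> space M) {a \<times> b |a b. a \<in> sets M \<and> b \<in> sets M}"
    by (rule rect_semiring)
  show emp: "ennreal (rr M A i j) = 0" if "i \<in> sets M \<and> j \<in> sets M" "i \<times> j = {}" for i j
    using that r_empty1 r_empty2 by auto
  show "ennreal (rr M A i j) = ennreal (rr M A k l)"
    if "i \<in> sets M \<and> j \<in> sets M" "k \<in> sets M \<and> l \<in> sets M" "i \<times> j = k \<times> l" for i j k l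
  proof (cases "i \<times> j = {}")
    case True
    then show ?thesis using emp[OF that(1)] emp[OF that(2)] that(3) by simp
  next
    case False
    then show ?thesis using that(3) by (auto simp: times_eq_iff)
  qed
  show "0 \<le> ennreal (rr M A i j)" for i j by simp
  show "(\<Sum>n. ennreal (rr M A (Sn n) (Tn n))) = ennreal (rr M A j k)"
    if "\<And>n. Sn n \<in> sets M \<and> Tn n \<in> sets M" "j \<in> sets M \<and> k \<in> sets M"
      "disjoint_family (\<lambda>n. Sn n \<times> Tn n)" "(\<Union>i. Sn i \<times> Tn i) = j \<times> k" for Sn Tn j k
    using that by (intro r_countable_add) auto
qed

lemma N0_sets: "sets N0 = sets (M \<Otimes>\<^sub>M M)"
proof -
  have im: "(\<lambda>(a, b). a \<times> b) ` {(a, b). a \<in> sets M \<and> b \<in> sets M} = {a \<times> b |a b. a \<in> sets M \<and> b \<in> sets M}"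
    by auto
  have "(\<lambda>(a, b). a \<times> b) ` {(a, b). a \<in> sets M \<and> b \<in> sets M} \<subseteq> Pow (space M \<times> space M)"
    by (auto dest!: sets.sets_into_space)
  then show ?thesis unfolding N0_def
    by (simp only: sets_extend_measure im sets_pair_measure)
qed

lemma N0_space: "space N0 = space M \<times> space M"
  using sets_eq_imp_space_eq[OF N0_sets] by (simp add: space_pair_measure)

lemma N0_adm: "admissible_measure M N0"
  unfolding admissible_measure_def
proof (intro conjI)
  show "sets N0 = sets (M \<Otimes>\<^sub>M M)" by (rule N0_sets)
  show "finite_measure N0"
    by (rule finite_measureI) (simp add: N0_space N0_rect)
  show "symmetric_measure M N0"
    unfolding symmetric_measure_def by (simp add: N0_rect r_sym)
  show "marginal_ac M N0"
    unfolding marginal_ac_def absolutely_continuous_def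
  proof
    fix S assume S: "S \<in> null_sets M"
    then have Ss: "S \<in> sets M" by auto
    have mf: "fst \<in> N0 \<rightarrow>\<^sub>M M"
      using measurable_cong_sets[OF N0_sets refl, of M] by simp
    have pre: "fst -` S \<inter> space N0 = S \<times> space M"
      using sets.sets_into_space[OF Ss] by (auto simp: N0_space)
    have "AE x in M. x \<notin> S" using S by (rule AE_not_in)
    then have "(\<integral>x. A (indicator (space M)) x * indicator S x \<partial>M) = (\<integral>x. 0 \<partial>M)"
      using integrable_real_mult_indicator[OF Ss a1(1)]
      by (intro integral_cong_AE) (auto elim: AE_mp simp: borel_measurable_integrable indicator_def)
    then have "rr M A (space M) S = 0" by (simp add: rr_def op_form_def)
    then have "emeasure (distr N0 M fst) S = 0"
      using Ss by (simp add: emeasure_distr[OF mf Ss] pre N0_rect r_sym)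
    then show "S \<in> null_sets (distr N0 M fst)" using Ss by (intro null_setsI) auto
  qed
qed

lemma N0_represents: "represents M A N0"
proof -
  interpret N: admN M N0 by (intro admN.intro admN_axioms.intro N0_adm) (rule prob_space_axioms)
  have AT: "AE x in M. A (indicator T) x = AN M N0 (indicator T) x" if T: "T \<in> sets M" for T
  proof (rule N.AN_AE_eq[OF A_int[OF Linf_indicator[OF T]] Linf_indicator[OF T]])
    fix S assume S: "S \<in> sets M"
    have "(\<integral>x. A (indicator T) x * indicator S x \<partial>M) = rr M A T S" by (simp add: rr_def op_form_def)
    also have "\<dots> = measure N0 (T \<times> S)"
      using N0_rect[OF T S] r_nonneg[OF T S] by (simp add: measure_def)
    also have "\<dots> = (\<integral>p. indicator T (fst p) * indicator S (snd p) \<partial>N0)"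
      using N.rect_int[OF T S] by simp
    finally show "(\<integral>x. A (indicator T) x * indicator S x \<partial>M) = (\<integral>p. indicator T (fst p) * indicator S (snd p) \<partial>N0)" .
  qed
  have Af: "AE x in M. A f x = AN M N0 f x" if f: "f \<in> Linf M" for f
  proof (rule N.AN_AE_eq[OF A_int[OF f] f])
    fix T assume T: "T \<in> sets M"
    have Fm: "(\<lambda>q. f (fst q) * indicator T (snd q)) \<in> borel_measurable (M \<Otimes>\<^sub>M M)"
      using Linf_meas[OF f] T by measurable
    have "(\<integral>x. A f x * indicator T x \<partial>M) = (\<integral>x. A (indicator T) x * f x \<partial>M)"
      using SA f Linf_indicator[OF T] unfolding self_adjoint_op_def op_form_def by blast
    also have "\<dots> = (\<integral>x. AN M N0 (indicator T) x * f x \<partial>M)"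
    proof (rule integral_cong_AE)
      obtain c where c: "AE x in M. \<bar>f x\<bar> \<le> c" using Linf_bdd[OF f] by blast
      show "(\<lambda>x. A (indicator T) x * f x) \<in> borel_measurable M"
        using integrable_mult_bdd[OF A_int[OF Linf_indicator[OF T]] Linf_meas[OF f] c]
        by (simp add: borel_measurable_integrable)
      show "(\<lambda>x. AN M N0 (indicator T) x * f x) \<in> borel_measurable M"
        using N.AN_meas[OF Linf_indicator[OF T]] Linf_meas[OF f] by measurable
      show "AE x in M. A (indicator T) x * f x = AN M N0 (indicator T) x * f x"
        using AT[OF T] by (auto elim: AE_mp)
    qed
    also have "\<dots> = (\<integral>p. indicator T (fst p) * f (snd p) \<partial>N0)"
      using N.AN_rep(2)[OF Linf_indicator[OF T] f] .
    also have "\<dots> = (\<integral>p. f (fst p) * indicator T (snd p) \<partial>N0)"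
      using N.int_swap[OF Fm] by (simp add: mult.commute)
    finally show "(\<integral>x. A f x * indicator T x \<partial>M) = (\<integral>p. f (fst p) * indicator T (snd p) \<partial>N0)" .
  qed
  show ?thesis
    unfolding represents_def op_form_def
  proof (intro ballI)
    fix f g assume f: "f \<in> Linf M" and g: "g \<in> Linf M"
    obtain c where c: "AE x in M. \<bar>g x\<bar> \<le> c" using Linf_bdd[OF g] by blast
    have "(\<integral>x. A f x * g x \<partial>M) = (\<integral>x. AN M N0 f x * g x \<partial>M)"
    proof (rule integral_cong_AE)
      show "(\<lambda>x. A f x * g x) \<in> borel_measurable M"
        using integrable_mult_bdd[OF A_int[OF f] Linf_meas[OF g] c]
        by (simp add: borel_measurable_integrable)
      show "(\<lambda>x. AN M N0 f x * g x) \<in> borel_measurable M"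
        using N.AN_meas[OF f] Linf_meas[OF g] by measurable
      show "AE x in M. A f x * g x = AN M N0 f x * g x"
        using Af[OF f] by (auto elim: AE_mp)
    qed
    also have "\<dots> = (\<integral>p. f (fst p) * g (snd p) \<partial>N0)" using N.AN_rep(2)[OF f g] .
    finally show "(\<integral>x. A f x * g x \<partial>M) = (\<integral>p. f (fst p) * g (snd p) \<partial>N0)" .
  qed
qed

lemma rep_rect:
  assumes "admissible_measure M N" "represents M A N" "S \<in> sets M" "T \<in> sets M"
  shows "emeasure N (S \<times> T) = ennreal (rr M A S T)"
proof -
  interpret N: admN M N by (intro admN.intro admN_axioms.intro assms(1)) (rule prob_space_axioms)
  have "rr M A S T = (\<integral>p. indicator S (fst p) * indicator T (snd p) \<partial>N)"
    using assms(2) Linf_indicator[OF assms(3)] Linf_indicator[OF assms(4)]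
    unfolding represents_def rr_def by blast
  then show ?thesis using N.rect_emeasure[OF assms(3,4)] by simp
qed

lemma part1: "\<exists>!N. admissible_measure M N \<and> represents M A N"
proof (rule ex1I[of _ N0])
  show "admissible_measure M N0 \<and> represents M A N0" using N0_adm N0_represents by simp
  fix N assume N: "admissible_measure M N \<and> represents M A N"
  show "N = N0"
    using N N0_adm by (intro adm_eq) (auto simp: rep_rect N0_rect)
qed

end

lemma part1_global:
  fixes M :: "'a::polish_space measure"
  assumes "prob_space M" "sets M = sets borel" "graphop M A"
  shows "\<exists>!N. admissible_measure M N \<and> represents M A N"
proof -
  interpret gphP M A
    by (intro gphP.intro gph.intro gphP_axioms.intro gph_axioms.intro assms)
  show ?thesis by (rule part1)
qed

lemma part2_global:
  assumes "prob_space M" "admissible_measure M N"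
  shows "\<exists>A. graphop M A \<and> represents M A N \<and>
               (\<forall>B. graphop M B \<and> represents M B N \<longrightarrow>
                  (\<forall>v\<in>Linf M. AE x in M. B v x = A v x))"
proof -
  interpret admN M N by (intro admN.intro admN_axioms.intro assms)
  show ?thesis
    using AN_graphop AN_represents AN_unique by blast
qed

theorem theorem6p3:
  fixes M :: "'a::polish_space measure"
  assumes "prob_space M" and "sets M = sets borel"
  shows "(\<forall>A. graphop M A \<longrightarrow>
            (\<exists>!N. admissible_measure M N \<and> represents M A N))
       \<and> (\<forall>N. admissible_measure M N \<longrightarrow>
            (\<exists>A. graphop M A \<and> represents M A N \<and>
               (\<forall>B. graphop M B \<and> represents M B N \<longrightarrow>
                  (\<forall>v\<in>Linf M. AE x in M. B v x = A v x))))"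
  using part1_global[OF assms] part2_global[OF assms(1)] by blast

end
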